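(* Let $N\ge 2$ be an integer and consider the one-mode projection graph $G_N$ on the primes $\le N$ defined below. Let $p_k$ denote the $k$-th prime ($p_1=2,p_2=3,\dots$) and set $p_0=1$. For a nonnegative integer $k$, let $P(k)$ be the fraction of primes $p\le N$ whose degree in $G_N$ equals $k$. Then $$P(k)=\frac{\pi\left(\frac{N}{p_k}\right)-\pi\left(\frac{N}{p_{k+1}}\right)}{\pi(N)},$$ where $\pi(x)$ is the number of primes $\le x$.
   Context: The graph $G_N$ has vertex set the primes $p\le N$. Two distinct primes $p,p'\le N$ are adjacent iff some composite integer $c\le N$ is divisible by both $p$ and $p'$. A prime $p$ carries a self-loop iff $p^2\le N$. The degree of $p$ is the number of distinct primes $p'\ne p$ adjacent to $p$, plus $1$ if $p$ carries a self-loop. *)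

theory Defs
  imports Complex_Main "HOL-Computational_Algebra.Primes" "HOL-Library.Infinite_Set"
begin

definition prime_pi :: "real \<Rightarrow> nat" where
  "prime_pi x = card {p::nat. prime p \<and> real p \<le> x}"

text \<open>p_k: p_0 = 1, p_1 = 2, p_2 = 3, ... (enumerate is 0-indexed).\<close>
definition pk :: "nat \<Rightarrow> nat" where
  "pk k = (if k = 0 then 1 else enumerate {p::nat. prime p} (k - 1))"

definition composite :: "nat \<Rightarrow> bool" where
  "composite c \<longleftrightarrow> c > 1 \<and> \<not> prime c"

definition adjG :: "nat \<Rightarrow> nat \<Rightarrow> nat \<Rightarrow> bool" where
  "adjG N p q \<longleftrightarrow> prime p \<and> prime q \<and> p \<le> N \<and> q \<le> N \<and> p \<noteq> q \<and>
     (\<exists>c. composite c \<and> c \<le> N \<and> p dvd c \<and> q dvd c)"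

definition selfloopG :: "nat \<Rightarrow> nat \<Rightarrow> bool" where
  "selfloopG N p \<longleftrightarrow> p ^ 2 \<le> N"

definition degG :: "nat \<Rightarrow> nat \<Rightarrow> nat" where
  "degG N p = card {q. q \<noteq> p \<and> adjG N p q} + (if selfloopG N p then 1 else 0)"

definition degdist :: "nat \<Rightarrow> nat \<Rightarrow> real" where
  "degdist N k = real (card {p. prime p \<and> p \<le> N \<and> degG N p = k})
                 / real (card {p::nat. prime p \<and> p \<le> N})"

end

theory Submission
  imports Defs
begin

lemma pk_pos: "pk k \<ge> 1"
proof (cases "k = 0")
  case False
  have "enumerate {p::nat. prime p} (k-1) \<in> {p. prime p}"
    by (rule enumerate_in_set[OF primes_infinite])
  then show ?thesis using False unfolding pk_def by (auto dest: prime_gt_0_nat)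
qed (simp add: pk_def)

lemma pk_prime: "k \<ge> 1 \<Longrightarrow> prime (pk k)"
  using enumerate_in_set[OF primes_infinite, of "k-1"] unfolding pk_def by auto

lemma pi_fin: "finite {p::nat. prime p \<and> real p \<le> x}"
  by (rule finite_subset[of _ "{..nat \<lfloor>x\<rfloor>}"]) (auto simp: le_nat_floor)

lemma pi_ge_iff:
  assumes "x \<ge> 1"
  shows "j \<le> prime_pi x \<longleftrightarrow> real (pk j) \<le> x"
proof (cases "j = 0")
  case True then show ?thesis using assms by (simp add: pk_def)
next
  case False
  define e where "e = enumerate {p::nat. prime p}"
  define S where "S = {p::nat. prime p \<and> real p \<le> x}"
  have inf: "infinite {p::nat. prime p}" by (rule primes_infinite)
  have pkj: "pk j = e (j-1)" using False by (simp add: pk_def e_def)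
  have einj: "inj e"
  proof (rule injI)
    fix a b assume h: "e a = e b"
    then have "e a \<le> e b" "e b \<le> e a" by simp_all
    then have "a \<le> b" "b \<le> a" unfolding e_def using inf enumerate_mono_le_iff by blast+
    then show "a = b" by simp
  qed
  show ?thesis
  proof
    assume h: "j \<le> prime_pi x"
    show "real (pk j) \<le> x"
    proof (rule ccontr)
      assume c: "\<not> real (pk j) \<le> x"
      have "S \<subseteq> e ` {..<j-1}"
      proof
        fix p assume "p \<in> S"
        then have pp: "prime p" "real p \<le> x" by (auto simp: S_def)
        obtain i where i: "e i = p" using enumerate_Ex[OF inf, of p] pp e_def by auto
        have "e i < e (j-1)" using c pp i pkj by auto
        then have "i < j-1" using inf e_def by simp
        then show "p \<in> e ` {..<j-1}" using i by auto
      qed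
      then have "card S \<le> card (e ` {..<j-1})" by (rule card_mono[rotated]) auto
      also have "\<dots> \<le> j - 1" using card_image_le by (metis card_lessThan finite_lessThan)
      finally show False using h False by (simp add: prime_pi_def S_def)
    qed
  next
    assume h: "real (pk j) \<le> x"
    have "e ` {..<j} \<subseteq> S"
    proof
      fix p assume "p \<in> e ` {..<j}"
      then obtain i where i: "i < j" "p = e i" by auto
      have "e i \<le> e (j-1)" using i inf e_def by simp
      moreover have "prime (e i)" using enumerate_in_set[OF inf] e_def by auto
      ultimately show "p \<in> S" using h pkj i by (auto simp: S_def)
    qed
    then have "card (e ` {..<j}) \<le> card S" using pi_fin S_def by (intro card_mono) auto
    moreover have "card (e ` {..<j}) = j"
      using card_image[OF inj_on_subset[OF einj]] by simp
    ultimately show "j \<le> prime_pi x" by (simp add: prime_pi_def S_def)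
  qed
qed

lemma prime_pi_nat: "prime_pi (real N) = card {p::nat. prime p \<and> p \<le> N}"
  by (simp add: prime_pi_def)

lemma adj_iff:
  assumes p: "prime p" "p \<le> N"
  shows "(q \<noteq> p \<and> adjG N p q) \<longleftrightarrow> (prime q \<and> q \<noteq> p \<and> p * q \<le> N)"
proof
  assume h: "q \<noteq> p \<and> adjG N p q"
  then obtain c where c: "composite c" "c \<le> N" "p dvd c" "q dvd c" and q: "prime q"
    unfolding adjG_def by blast
  have cop: "coprime p q" using h q p by (simp add: primes_coprime)
  have "p * q dvd c" by (rule divides_mult[OF c(3) c(4) cop])
  moreover have "c > 0" using c(1) unfolding composite_def by simp
  ultimately have "p * q \<le> c" by (rule dvd_imp_le)
  then show "prime q \<and> q \<noteq> p \<and> p * q \<le> N" using c(2) h q by simp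
next
  assume h: "prime q \<and> q \<noteq> p \<and> p * q \<le> N"
  have q1: "q > 1" using h prime_gt_1_nat by blast
  have p1: "p > 1" using p prime_gt_1_nat by blast
  have "composite (p*q)" unfolding composite_def
  proof
    show "1 < p * q" using p1 q1 by (simp add: one_less_mult)
    show "\<not> prime (p * q)"
    proof
      assume "prime (p * q)"
      then have "p = 1 \<or> q = 1" using prime_product by blast
      then show False using p1 q1 by simp
    qed
  qed
  moreover have "q \<le> N"
  proof -
    have "1 * q \<le> p * q" using p1 by (intro mult_le_mono1) simp
    then show ?thesis using h by (metis mult_1 order_trans)
  qed
  moreover have "p dvd p * q" "q dvd p * q" by simp_all
  ultimately have "\<exists>c. composite c \<and> c \<le> N \<and> p dvd c \<and> q dvd c" using h by blast
  then show "q \<noteq> p \<and> adjG N p q" using h p \<open>q \<le> N\<close> unfolding adjG_def by blast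
qed

lemma deg_eq:
  assumes p: "prime p" "p \<le> N"
  shows "degG N p = prime_pi (real N / real p)"
proof -
  have pos: "real p > 0" using prime_gt_0_nat[OF p(1)] by simp
  have eqA: "{q. q \<noteq> p \<and> adjG N p q} = {q. prime q \<and> q \<noteq> p \<and> p * q \<le> N}"
    using adj_iff[OF p] by auto
  have eqB: "{q::nat. prime q \<and> real q \<le> real N / real p} = {q. prime q \<and> p * q \<le> N}"
  proof -
    have "real q \<le> real N / real p \<longleftrightarrow> p * q \<le> N" for q
    proof -
      have "real q \<le> real N / real p \<longleftrightarrow> real q * real p \<le> real N" by (rule pos_le_divide_eq[OF pos])
      also have "\<dots> \<longleftrightarrow> real (p*q) \<le> real N" by (simp only: of_nat_mult mult.commute)
      also have "\<dots> \<longleftrightarrow> p*q \<le> N" by (rule of_nat_le_iff)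
      finally show ?thesis .
    qed
    then show ?thesis by auto
  qed
  have qle: "q \<le> N" if "p * q \<le> N" for q
  proof -
    have "1 * q \<le> p * q" using prime_gt_0_nat[OF p(1)] by (intro mult_le_mono1) simp
    then show ?thesis using that by (metis mult_1 order_trans)
  qed
  have fin: "finite {q. prime q \<and> p * q \<le> N}"
  proof (rule finite_subset[of _ "{..N}"])
    show "{q. prime q \<and> p * q \<le> N} \<subseteq> {..N}" using qle by auto
  qed simp
  show ?thesis
  proof (cases "p^2 \<le> N")
    case True
    have "{q. prime q \<and> p * q \<le> N} = insert p {q. prime q \<and> q \<noteq> p \<and> p * q \<le> N}"
      using True p by (auto simp: power2_eq_square)
    then have "card {q. prime q \<and> p * q \<le> N} = Suc (card {q. prime q \<and> q \<noteq> p \<and> p * q \<le> N})"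
      using fin by (simp add: card_insert_if)
    then show ?thesis using True unfolding degG_def selfloopG_def prime_pi_def eqA eqB by simp
  next
    case False
    have "{q. prime q \<and> p * q \<le> N} = {q. prime q \<and> q \<noteq> p \<and> p * q \<le> N}"
      using False by (auto simp: power2_eq_square)
    then show ?thesis using False unfolding degG_def selfloopG_def prime_pi_def eqA eqB by simp
  qed
qed

theorem mainTheorem9:
  fixes N k :: nat
  assumes "N \<ge> 2"
  shows "degdist N k =
    (real (prime_pi (real N / real (pk k))) - real (prime_pi (real N / real (pk (Suc k)))))
    / real (prime_pi (real N))"
proof -
  define A where "A j = {p::nat. prime p \<and> real p \<le> real N / real (pk j)}" for j
  have pkpos: "real (pk j) > 0" for j using pk_pos[of j] by simp
  have key: "real (pk j) \<le> real N / real p \<longleftrightarrow> real p \<le> real N / real (pk j)"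
    if "p > 0" for p j
  proof -
    have pp: "real p > 0" using that by simp
    have "real (pk j) \<le> real N / real p \<longleftrightarrow> real (pk j) * real p \<le> real N" by (rule pos_le_divide_eq[OF pp])
    also have "\<dots> \<longleftrightarrow> real p * real (pk j) \<le> real N" by (simp only: mult.commute)
    also have "\<dots> \<longleftrightarrow> real p \<le> real N / real (pk j)" by (rule pos_le_divide_eq[OF pkpos, symmetric])
    finally show ?thesis .
  qed
  have S: "{p. prime p \<and> p \<le> N \<and> degG N p = k} = A k - A (Suc k)"
  proof (intro set_eqI iffI)
    fix p assume h: "p \<in> {p. prime p \<and> p \<le> N \<and> degG N p = k}"
    then have pp: "prime p" "p \<le> N" and d: "prime_pi (real N / real p) = k"
      using deg_eq by auto
    have x1: "real N / real p \<ge> 1" using pp prime_gt_0_nat[of p] by (simp add: field_simps)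
    have "real (pk k) \<le> real N / real p" using pi_ge_iff[OF x1, of k] d by simp
    moreover have "\<not> real (pk (Suc k)) \<le> real N / real p" using pi_ge_iff[OF x1, of "Suc k"] d by simp
    ultimately show "p \<in> A k - A (Suc k)" using key[of p] pp prime_gt_0_nat[of p] by (auto simp: A_def)
  next
    fix p assume h: "p \<in> A k - A (Suc k)"
    then have pp: "prime p" and a: "real p \<le> real N / real (pk k)"
      and b: "\<not> real p \<le> real N / real (pk (Suc k))" by (auto simp: A_def)
    have p0: "p > 0" using pp prime_gt_0_nat by auto
    have "real N / real (pk k) \<le> real N" using pk_pos[of k]
      by (simp add: divide_le_eq mult_le_cancel_left1 pkpos)
    then have pN: "p \<le> N" using a by linarith
    have x1: "real N / real p \<ge> 1" using pN p0 by (simp add: field_simps)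
    have "k \<le> prime_pi (real N / real p)" using pi_ge_iff[OF x1, of k] key[OF p0] a by simp
    moreover have "\<not> Suc k \<le> prime_pi (real N / real p)" using pi_ge_iff[OF x1, of "Suc k"] key[OF p0] b by simp
    ultimately show "p \<in> {p. prime p \<and> p \<le> N \<and> degG N p = k}"
      using deg_eq[OF pp pN] pp pN by auto
  qed
  have sub: "A (Suc k) \<subseteq> A k"
  proof -
    have "pk k \<le> pk (Suc k)"
    proof (cases k)
      case 0 then show ?thesis using pk_pos[of "Suc k"] by (simp add: pk_def)
    next
      case (Suc m) then show ?thesis by (simp add: pk_def primes_infinite)
    qed
    then have "real N / real (pk (Suc k)) \<le> real N / real (pk k)"
      using pkpos[of k] by (intro divide_left_mono) auto
    then show ?thesis unfolding A_def by auto
  qed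
  have fin: "finite (A j)" for j unfolding A_def by (rule pi_fin)
  have "card (A k - A (Suc k)) = card (A k) - card (A (Suc k))"
    using sub fin by (simp add: card_Diff_subset)
  moreover have "card (A (Suc k)) \<le> card (A k)" using sub fin by (simp add: card_mono)
  ultimately have "real (card (A k - A (Suc k))) = real (card (A k)) - real (card (A (Suc k)))"
    by simp
  moreover have eA: "prime_pi (real N / real (pk j)) = card (A j)" for j
    unfolding prime_pi_def A_def by (rule refl)
  ultimately show ?thesis unfolding degdist_def S prime_pi_nat eA
    by (simp only:)
qed

end
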